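(* For integers $s,t\ge0$ let $m_{i,j}^{s,t}=\int_{(0,1)^2}\frac{x^{s+i}y^{s+j}}{x+y}\left(\frac{1-x}{1+x}\right)^t\left(\frac{1-y}{1+y}\right)^tdx\,dy$, $\phi_i^{s,t}=\sqrt2\int_0^1\frac{x^{s+i}}{1+x}\left(\frac{1-x}{1+x}\right)^tdx$, $\tau_n^{s,t}=\det(m_{i,j}^{s,t})_{i,j=0}^{n-1}$, $\xi_n^{s,t}=\det(m_{i,j+1}^{s,t})_{i,j=0}^{n-1}$ (with $\tau_0^{s,t}=\xi_0^{s,t}=1$), and for $n\ge0$ the $(n+1)\times(n+1)$ determinants $$\sigma_n^{s,t}=\det\begin{pmatrix} m_{0,0}^{s,t}&\cdots&m_{0,n-1}^{s,t}&\phi_0^{s,t}\\ \vdots&&\vdots&\vdots\\ m_{n,0}^{s,t}&\cdots&m_{n,n-1}^{s,t}&\phi_n^{s,t}\end{pmatrix},\qquad \psi_n^{s,t}=\det\begin{pmatrix} m_{0,1}^{s,t}&\cdots&m_{0,n}^{s,t}&\phi_0^{s,t}\\ \vdots&&\vdots&\vdots\\ m_{n,1}^{s,t}&\cdots&m_{n,n}^{s,t}&\phi_n^{s,t}\end{pmatrix}.$$ Then for all $n\ge1$ and $s,t\ge0$: $$\tau_{n+1}^{s,t}\tau_{n-1}^{s+1,t}=\tau_n^{s,t}\tau_n^{s+1,t}-(\xi_n^{s,t})^2,$$ $$\tau_n^{s,t+1}\tau_{n-1}^{s,t}=\tau_n^{s,t}\tau_{n-1}^{s,t+1}-(\sigma_{n-1}^{s,t})^2,$$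 $$\tau_n^{s,t+1}\tau_{n-1}^{s+1,t}=\tau_n^{s,t}\tau_{n-1}^{s+1,t+1}-(\psi_{n-1}^{s,t})^2,$$ $$\tau_n^{s,t+1}\xi_{n-1}^{s,t}=\tau_n^{s,t}\xi_{n-1}^{s,t+1}-\psi_{n-1}^{s,t}\sigma_{n-1}^{s,t}.$$
   Context: Empty determinants equal $1$; for $n=0$, $\sigma_0^{s,t}=\psi_0^{s,t}=\phi_0^{s,t}$. *)

theory Defs
  imports "HOL-Analysis.Analysis"
begin

definition detn :: "nat \<Rightarrow> (nat \<Rightarrow> nat \<Rightarrow> real) \<Rightarrow> real" where
  "detn n A = (\<Sum>p | p permutes {..<n}. of_int (sign p) * (\<Prod>i<n. A i (p i)))"

definition mm :: "nat \<Rightarrow> nat \<Rightarrow> nat \<Rightarrow> nat \<Rightarrow> real" where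
  "mm s t i j = (LINT z : {0<..<1} \<times> {0<..<1} | lborel.
      (fst z ^ (s+i) * snd z ^ (s+j) / (fst z + snd z)) *
      ((1 - fst z) / (1 + fst z)) ^ t * ((1 - snd z) / (1 + snd z)) ^ t)"

definition phi :: "nat \<Rightarrow> nat \<Rightarrow> nat \<Rightarrow> real" where
  "phi s t i = sqrt 2 * (LINT x : {0<..<1} | lborel. x ^ (s+i) / (1 + x) * ((1 - x) / (1 + x)) ^ t)"

definition tau :: "nat \<Rightarrow> nat \<Rightarrow> nat \<Rightarrow> real" where
  "tau s t n = detn n (\<lambda>i j. mm s t i j)"

definition xi :: "nat \<Rightarrow> nat \<Rightarrow> nat \<Rightarrow> real" where
  "xi s t n = detn n (\<lambda>i j. mm s t i (j+1))"

definition sigma :: "nat \<Rightarrow> nat \<Rightarrow> nat \<Rightarrow> real" where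
  "sigma s t n = detn (n+1) (\<lambda>i j. if j < n then mm s t i j else phi s t i)"

definition psi :: "nat \<Rightarrow> nat \<Rightarrow> nat \<Rightarrow> real" where
  "psi s t n = detn (n+1) (\<lambda>i j. if j < n then mm s t i (j+1) else phi s t i)"

end

theory Submission
  imports Defs "Jordan_Normal_Form.Char_Poly"
begin


definition gdet :: "nat \<Rightarrow> (nat \<Rightarrow> nat \<Rightarrow> 'a::comm_ring_1) \<Rightarrow> 'a" where
  "gdet n A = (\<Sum>p | p permutes {..<n}. of_int (sign p) * (\<Prod>i<n. A i (p i)))"

lemma detn_gdet: "detn n A = gdet n A"
  by (simp add: detn_def gdet_def)

lemma gdet_mat: "gdet n A = Determinant.det (Matrix.mat n n (\<lambda>(i,j). A i j))"
proof -
  have "Determinant.det (Matrix.mat n n (\<lambda>(i,j). A i j)) =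
     (\<Sum>p \<in> {p. p permutes {0..<n}}. of_int (sign p) * (\<Prod>i=0..<n. Matrix.mat n n (\<lambda>(i,j). A i j) $$ (i, p i)))"
    by (rule det_def') auto
  also have "\<dots> = gdet n A" unfolding gdet_def lessThan_atLeast0
  proof (rule sum.cong[OF refl])
    fix p assume "p \<in> {p. p permutes {0..<n}}"
    then have "p permutes {0..<n}" by simp
    then have "\<And>i. i < n \<Longrightarrow> p i < n" using permutes_in_image by fastforce
    then show "of_int (sign p) * (\<Prod>i=0..<n. Matrix.mat n n (\<lambda>(i,j). A i j) $$ (i, p i)) =
       of_int (sign p) * (\<Prod>i=0..<n. A i (p i))"
      by (auto intro!: prod.cong)
  qed
  finally show ?thesis by simp
qed

lemma gdet_cong: assumes "\<And>i j. i < n \<Longrightarrow> j < n \<Longrightarrow> A i j = B i j"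
  shows "gdet n A = gdet n B"
  unfolding gdet_mat by (rule arg_cong[where f=Determinant.det]) (auto simp: assms)

lemma gdet_rows: assumes p: "p permutes {..<n}"
  shows "gdet n (\<lambda>i j. A (p i) j) = of_int (sign p) * gdet n A"
proof -
  have p': "p permutes {0..<n}" using p by (simp add: lessThan_atLeast0)
  have pi: "\<And>i. i < n \<Longrightarrow> p i < n" using permutes_in_image p by fastforce
  have "Matrix.mat n n (\<lambda>(i,j). A (p i) j) = Matrix.mat n n (\<lambda>(i,j). Matrix.mat n n (\<lambda>(i,j). A i j) $$ (p i, j))"
    by (rule eq_matI) (auto simp: pi)
  then show ?thesis unfolding gdet_mat
    using det_permute_rows[OF _ p', of "Matrix.mat n n (\<lambda>(i,j). A i j)"] by simp
qed

lemma gdet_transpose: "gdet n (\<lambda>i j. A j i) = gdet n A"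
proof -
  have "Matrix.mat n n (\<lambda>(i,j). A j i) = transpose_mat (Matrix.mat n n (\<lambda>(i,j). A i j))"
    by (rule eq_matI) auto
  then show ?thesis unfolding gdet_mat using det_transpose[of "Matrix.mat n n (\<lambda>(i,j). A i j)" n] by simp
qed

lemma gdet_cols: assumes p: "p permutes {..<n}"
  shows "gdet n (\<lambda>i j. A i (p j)) = of_int (sign p) * gdet n A"
proof -
  have "gdet n (\<lambda>i j. A i (p j)) = gdet n (\<lambda>i j. A j (p i))" by (rule gdet_transpose[symmetric])
  also have "\<dots> = of_int (sign p) * gdet n (\<lambda>i j. A j i)" by (rule gdet_rows[OF p])
  also have "gdet n (\<lambda>i j. A j i) = gdet n A" by (rule gdet_transpose)
  finally show ?thesis .
qed

lemma gdet_poly: "gdet n (\<lambda>i j. poly (H i j) x) = poly (gdet n H) x"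
  by (simp add: gdet_def poly_sum poly_prod)


lemma schur:
  fixes A :: "'a::idom mat"
  assumes A: "A \<in> carrier_mat k k" and B: "B \<in> carrier_mat k m"
    and C: "C \<in> carrier_mat m k" and D: "D \<in> carrier_mat m m"
  shows "Determinant.det (four_block_mat A B C D) * Determinant.det A ^ m =
     Determinant.det A * Determinant.det (Determinant.det A \<cdot>\<^sub>m D - C * (adj_mat A * B))"
proof -
  let ?d = "Determinant.det A"
  let ?Q = "four_block_mat (1\<^sub>m k) (-(adj_mat A * B)) (0\<^sub>m m k) (?d \<cdot>\<^sub>m 1\<^sub>m m)"
  have adj: "adj_mat A \<in> carrier_mat k k" "A * adj_mat A = ?d \<cdot>\<^sub>m 1\<^sub>m k" by (rule adj_mat(1)[OF A], rule adj_mat(2)[OF A])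
  have aB: "adj_mat A * B \<in> carrier_mat k m" by (rule mult_carrier_mat[OF adj(1) B])
  have prod: "four_block_mat A B C D * ?Q = four_block_mat (A * 1\<^sub>m k + B * 0\<^sub>m m k)
      (A * (-(adj_mat A * B)) + B * (?d \<cdot>\<^sub>m 1\<^sub>m m))
      (C * 1\<^sub>m k + D * 0\<^sub>m m k) (C * (-(adj_mat A * B)) + D * (?d \<cdot>\<^sub>m 1\<^sub>m m))"
    by (rule mult_four_block_mat[OF A B C D one_carrier_mat uminus_carrier_mat[OF aB] zero_carrier_mat smult_carrier_mat[OF one_carrier_mat]])
  have e1: "A * 1\<^sub>m k + B * 0\<^sub>m m k = A" unfolding right_mult_one_mat[OF A] right_mult_zero_mat[OF B] by (rule right_add_zero_mat[OF A])
  have "A * (adj_mat A * B) = (A * adj_mat A) * B" by (rule assoc_mult_mat[OF A adj(1) B, symmetric])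
  also have "\<dots> = ?d \<cdot>\<^sub>m B" unfolding adj(2) mult_smult_assoc_mat[OF one_carrier_mat B] left_mult_one_mat[OF B] ..
  finally have AaB: "A * (adj_mat A * B) = ?d \<cdot>\<^sub>m B" .
  have Bd: "B * (?d \<cdot>\<^sub>m 1\<^sub>m m) = ?d \<cdot>\<^sub>m B"
    unfolding mult_smult_distrib[OF B one_carrier_mat] right_mult_one_mat[OF B] ..
  have Dd: "D * (?d \<cdot>\<^sub>m 1\<^sub>m m) = ?d \<cdot>\<^sub>m D"
    unfolding mult_smult_distrib[OF D one_carrier_mat] right_mult_one_mat[OF D] ..
  have dA: "dim_col A = dim_row (adj_mat A * B)" using A adj(1) B by simp
  have dC: "dim_col C = dim_row (adj_mat A * B)" using C adj(1) B by simp
  have e2: "A * (-(adj_mat A * B)) + B * (?d \<cdot>\<^sub>m 1\<^sub>m m) = 0\<^sub>m k m"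
    unfolding uminus_mult_right_mat[OF dA] AaB Bd
    by (rule uminus_l_inv_mat) (use B in simp)
  have e3: "C * 1\<^sub>m k + D * 0\<^sub>m m k = C" unfolding right_mult_one_mat[OF C] right_mult_zero_mat[OF D] by (rule right_add_zero_mat[OF C])
  have CaB: "C * (adj_mat A * B) \<in> carrier_mat m m" by (rule mult_carrier_mat[OF C aB])
  have e4: "C * (-(adj_mat A * B)) + D * (?d \<cdot>\<^sub>m 1\<^sub>m m) = ?d \<cdot>\<^sub>m D - C * (adj_mat A * B)"
    unfolding uminus_mult_right_mat[OF dC] Dd
    unfolding minus_add_uminus_mat[OF smult_carrier_mat[OF D] CaB] by (rule comm_add_mat[OF uminus_carrier_mat[OF CaB] smult_carrier_mat[OF D]])
  have S: "?d \<cdot>\<^sub>m D - C * (adj_mat A * B) \<in> carrier_mat m m" using CaB by (rule minus_carrier_mat)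
  have M: "four_block_mat A B C D \<in> carrier_mat (k+m) (k+m)" by (rule four_block_carrier_mat[OF A D])
  have Q: "?Q \<in> carrier_mat (k+m) (k+m)" by (rule four_block_carrier_mat) (auto intro: smult_carrier_mat)
  have "Determinant.det ?Q = Determinant.det (1\<^sub>m k) * Determinant.det (?d \<cdot>\<^sub>m 1\<^sub>m m)"
    by (rule det_four_block_mat_lower_left_zero[OF one_carrier_mat uminus_carrier_mat[OF aB] refl smult_carrier_mat[OF one_carrier_mat]])
  then have dQ: "Determinant.det ?Q = ?d ^ m" by simp
  have 1: "Determinant.det (four_block_mat A B C D * ?Q) = Determinant.det (four_block_mat A B C D) * ?d ^ m"
    using det_mult[OF M Q] unfolding dQ .
  have 2: "Determinant.det (four_block_mat A B C D * ?Q) = ?d * Determinant.det (?d \<cdot>\<^sub>m D - C * (adj_mat A * B))"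
    unfolding prod e1 e2 e3 e4
    by (rule det_four_block_mat_upper_right_zero[OF A refl C S])
  show ?thesis using trans[OF 1[symmetric] 2] .
qed


lemma det2: "Determinant.det (Matrix.mat 2 2 f) = f (0,0) * f (1,1) - f (0,1) * (f (1,0) :: 'a::comm_ring_1)"
proof -
  have "Determinant.det (Matrix.mat 2 2 f) = (\<Sum>i<2. Matrix.mat 2 2 f $$ (i,0) * cofactor (Matrix.mat 2 2 f) i 0)"
    by (rule laplace_expansion_column) auto
  also have "\<dots> = f (0,0) * f (1,1) - f (0,1) * f (1,0)"
    by (simp add: numeral_2_eq_2 cofactor_def det_single mat_delete_def)
  finally show ?thesis .
qed

lemma schur_gdet:
  fixes G :: "nat \<Rightarrow> nat \<Rightarrow> 'a::idom" and k m :: nat and ri cj :: "nat \<Rightarrow> nat"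
  defines "Am \<equiv> Matrix.mat k k (\<lambda>(i,j). G i j)"
  defines "T \<equiv> \<lambda>x y. \<Sum>l\<in>{0..<k}. G x l * (\<Sum>l'\<in>{0..<k}. adj_mat Am $$ (l,l') * G l' y)"
  shows "gdet (k+m) (\<lambda>i j. G (if i<k then i else k + ri (i-k)) (if j<k then j else k + cj (j-k))) * gdet k G ^ m
     = gdet k G * Determinant.det (Matrix.mat m m (\<lambda>(i,j). gdet k G * G (k+ri i) (k+cj j) - T (k+ri i) (k+cj j)))"
proof -
  define B where "B = Matrix.mat k m (\<lambda>(i,j). G i (k + cj j))"
  define C where "C = Matrix.mat m k (\<lambda>(i,j). G (k + ri i) j)"
  define D where "D = Matrix.mat m m (\<lambda>(i,j). G (k + ri i) (k + cj j))"
  have A: "Am \<in> carrier_mat k k" and Bc: "B \<in> carrier_mat k m" and Cc: "C \<in> carrier_mat m k" and Dc: "D \<in> carrier_mat m m"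
    by (auto simp: Am_def B_def C_def D_def)
  have adj: "adj_mat Am \<in> carrier_mat k k" by (rule adj_mat(1)[OF A])
  have 1: "Matrix.mat (k+m) (k+m) (\<lambda>(i,j). G (if i<k then i else k + ri (i-k)) (if j<k then j else k + cj (j-k)))
      = four_block_mat Am B C D"
    by (rule eq_matI) (auto simp: Am_def B_def C_def D_def)
  have 2: "gdet k G \<cdot>\<^sub>m D - C * (adj_mat Am * B) = Matrix.mat m m (\<lambda>(i,j). gdet k G * G (k+ri i) (k+cj j) - T (k+ri i) (k+cj j))"
  proof (rule eq_matI)
    fix i j assume ij: "i < dim_row (Matrix.mat m m (\<lambda>(i,j). gdet k G * G (k+ri i) (k+cj j) - T (k+ri i) (k+cj j)))"
       "j < dim_col (Matrix.mat m m (\<lambda>(i,j). gdet k G * G (k+ri i) (k+cj j) - T (k+ri i) (k+cj j)))"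
    then have i: "i < m" and j: "j < m" by auto
    have "(C * (adj_mat Am * B)) $$ (i,j) = T (k+ri i) (k+cj j)"
      using i j adj unfolding T_def
      by (auto simp: C_def B_def scalar_prod_def intro!: sum.cong)
    then show "(gdet k G \<cdot>\<^sub>m D - C * (adj_mat Am * B)) $$ (i, j) = Matrix.mat m m (\<lambda>(i,j). gdet k G * G (k+ri i) (k+cj j) - T (k+ri i) (k+cj j)) $$ (i, j)"
      using i j adj Cc Bc Dc by (simp add: D_def)
  qed (use adj Cc Bc Dc in auto)
  have d: "gdet k G = Determinant.det Am" unfolding Am_def by (rule gdet_mat)
  from schur[OF A Bc Cc Dc] have "Determinant.det (four_block_mat Am B C D) * gdet k G ^ m = gdet k G * Determinant.det (gdet k G \<cdot>\<^sub>m D - C * (adj_mat Am * B))"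
    unfolding d .
  then show ?thesis unfolding gdet_mat[of "k+m"] 1 2 .
qed


lemma DJ_idom:
  fixes G :: "nat \<Rightarrow> nat \<Rightarrow> 'a::idom" and k :: nat
  assumes nz: "gdet k G \<noteq> 0"
  defines "r \<equiv> \<lambda>i. if i < k then i else Suc k"
  shows "gdet (k+2) G * gdet k G = gdet (k+1) G * gdet (k+1) (\<lambda>i j. G (r i) (r j))
     - gdet (k+1) (\<lambda>i j. G (r i) j) * gdet (k+1) (\<lambda>i j. G i (r j))"
proof -
  define Am where "Am = Matrix.mat k k (\<lambda>(i,j). G i j)"
  define T where "T = (\<lambda>x y. \<Sum>l\<in>{0..<k}. G x l * (\<Sum>l'\<in>{0..<k}. adj_mat Am $$ (l,l') * G l' y))"
  define d where "d = gdet k G"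
  define S where "S = (\<lambda>x y. d * G x y - T x y)"
  have one: "gdet (k+1) (\<lambda>i j. G (if i<k then i else k + a) (if j<k then j else k + b)) = S (k+a) (k+b)" for a b
  proof -
    have "gdet (k+1) (\<lambda>i j. G (if i<k then i else k + (\<lambda>_. a) (i-k)) (if j<k then j else k + (\<lambda>_. b) (j-k))) * d ^ 1
      = d * Determinant.det (Matrix.mat 1 1 (\<lambda>(i,j). d * G (k+(\<lambda>_. a) i) (k+(\<lambda>_. b) j) - T (k+(\<lambda>_. a) i) (k+(\<lambda>_. b) j)))"
      unfolding d_def T_def Am_def by (rule schur_gdet)
    then have "gdet (k+1) (\<lambda>i j. G (if i<k then i else k + a) (if j<k then j else k + b)) * d = d * S (k+a) (k+b)"
      by (simp add: det_single S_def)
    then show ?thesis using nz unfolding d_def by (simp add: mult.commute)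
  qed
  have two: "gdet (k+2) G * d = S k k * S (k+1) (k+1) - S k (k+1) * S (k+1) k"
  proof -
    have "gdet (k+2) (\<lambda>i j. G (if i<k then i else k + id (i-k)) (if j<k then j else k + id (j-k))) * d ^ 2
      = d * Determinant.det (Matrix.mat 2 2 (\<lambda>(i,j). d * G (k+id i) (k+id j) - T (k+id i) (k+id j)))"
      unfolding d_def T_def Am_def by (rule schur_gdet)
    moreover have "gdet (k+2) (\<lambda>i j. G (if i<k then i else k + id (i-k)) (if j<k then j else k + id (j-k))) = gdet (k+2) G"
      by (rule gdet_cong) auto
    ultimately have "gdet (k+2) G * d ^ 2 = d * (S k k * S (k+1) (k+1) - S k (k+1) * S (k+1) k)"
      by (simp add: det2 S_def)
    then show ?thesis using nz unfolding d_def by (simp add: power2_eq_square mult.assoc)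
  qed
  have e00: "gdet (k+1) G = S k k"
  proof -
    have h: "\<And>i. i < k+1 \<Longrightarrow> (if i<k then i else k + 0) = i" by auto
    have "gdet (k+1) G = gdet (k+1) (\<lambda>i j. G (if i<k then i else k + 0) (if j<k then j else k + 0))"
      by (rule gdet_cong) (simp add: h)
    then show ?thesis using one[of 0 0] by simp
  qed
  have e11: "gdet (k+1) (\<lambda>i j. G (r i) (r j)) = S (k+1) (k+1)"
    unfolding r_def Suc_eq_plus1 using one[of 1 1] .
  have e10: "gdet (k+1) (\<lambda>i j. G (r i) j) = S (k+1) k"
  proof -
    have "gdet (k+1) (\<lambda>i j. G (r i) j) = gdet (k+1) (\<lambda>i j. G (if i<k then i else k + 1) (if j<k then j else k + 0))"
      by (rule gdet_cong) (auto simp: r_def less_Suc_eq)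
    then show ?thesis using one[of 1 0] by simp
  qed
  have e01: "gdet (k+1) (\<lambda>i j. G i (r j)) = S k (k+1)"
  proof -
    have "gdet (k+1) (\<lambda>i j. G i (r j)) = gdet (k+1) (\<lambda>i j. G (if i<k then i else k + 0) (if j<k then j else k + 1))"
      by (rule gdet_cong) (auto simp: r_def less_Suc_eq)
    then show ?thesis using one[of 0 1] by simp
  qed
  show ?thesis unfolding e00 e11 e10 e01 two[unfolded d_def] by (simp add: mult.commute)
qed

lemma DJ:
  fixes F :: "nat \<Rightarrow> nat \<Rightarrow> real" and k :: nat
  defines "r \<equiv> \<lambda>i. if i < k then i else Suc k"
  shows "gdet (k+2) F * gdet k F = gdet (k+1) F * gdet (k+1) (\<lambda>i j. F (r i) (r j))
     - gdet (k+1) (\<lambda>i j. F (r i) j) * gdet (k+1) (\<lambda>i j. F i (r j))"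
proof -
  define G where "G = (\<lambda>i j. [:F i j:] + (if i = j \<and> i < k then [:0,1:] else 0))"
  define Am where "Am = Matrix.mat k k (\<lambda>(i,j). - F i j)"
  have Am: "Am \<in> carrier_mat k k" unfolding Am_def by simp
  have "gdet k G = char_poly Am"
    unfolding gdet_mat char_poly_def char_poly_matrix_def
    by (rule arg_cong[where f=Determinant.det], rule eq_matI) (auto simp: G_def Am_def)
  moreover have "char_poly Am \<noteq> 0"
  proof
    assume "char_poly Am = 0"
    then show False using degree_monic_char_poly[OF Am] by simp
  qed
  ultimately have nz: "gdet k G \<noteq> 0" by simp
  have ev: "\<And>i j. poly (G i j) 0 = F i j" by (auto simp: G_def)
  have "poly (gdet (k+2) G * gdet k G) 0 = poly (gdet (k+1) G * gdet (k+1) (\<lambda>i j. G (r i) (r j))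
     - gdet (k+1) (\<lambda>i j. G (r i) j) * gdet (k+1) (\<lambda>i j. G i (r j))) 0"
    using DJ_idom[OF nz] unfolding r_def by simp
  then show ?thesis
    unfolding poly_mult poly_diff gdet_poly[symmetric] ev .
qed


lemma bordered:
  fixes A :: "nat \<Rightarrow> nat \<Rightarrow> 'a::idom"
  assumes one: "A n n = 1"
  shows "gdet (Suc n) A = gdet n (\<lambda>i j. A i j - A i n * A n j)"
proof -
  define Am where "Am = Matrix.mat n n (\<lambda>(i,j). A i j)"
  define b where "b = Matrix.mat n 1 (\<lambda>(i,j). A i n)"
  define c where "c = Matrix.mat 1 n (\<lambda>(i,j). A n j)"
  have Am: "Am \<in> carrier_mat n n" and bc: "b \<in> carrier_mat n 1" and cc: "c \<in> carrier_mat 1 n"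
    by (auto simp: Am_def b_def c_def)
  have mc: "- c \<in> carrier_mat 1 n" using cc by simp
  let ?M = "four_block_mat Am b c (1\<^sub>m 1)"
  let ?R = "four_block_mat (1\<^sub>m n) (0\<^sub>m n 1) (- c) (1\<^sub>m 1)"
  have M: "Matrix.mat (Suc n) (Suc n) (\<lambda>(i,j). A i j) = ?M"
    by (rule eq_matI) (auto simp: Am_def b_def c_def one less_Suc_eq)
  have prod: "?M * ?R = four_block_mat (Am * 1\<^sub>m n + b * (- c)) (Am * 0\<^sub>m n 1 + b * 1\<^sub>m 1)
     (c * 1\<^sub>m n + 1\<^sub>m 1 * (- c)) (c * 0\<^sub>m n 1 + 1\<^sub>m 1 * 1\<^sub>m 1)"
    by (rule mult_four_block_mat[OF Am bc cc one_carrier_mat one_carrier_mat zero_carrier_mat mc one_carrier_mat])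
  have e1: "Am * 1\<^sub>m n + b * (- c) = Matrix.mat n n (\<lambda>(i,j). A i j - A i n * A n j)"
  proof (rule eq_matI)
    fix i j assume "i < dim_row (Matrix.mat n n (\<lambda>(i,j). A i j - A i n * A n j))"
      "j < dim_col (Matrix.mat n n (\<lambda>(i,j). A i j - A i n * A n j))"
    then have i: "i < n" and j: "j < n" by auto
    have "(b * (- c)) $$ (i,j) = - (A i n * A n j)"
      using i j by (simp add: b_def c_def scalar_prod_def)
    then show "(Am * 1\<^sub>m n + b * (- c)) $$ (i,j) = Matrix.mat n n (\<lambda>(i,j). A i j - A i n * A n j) $$ (i,j)"
      using i j Am bc mc by (simp add: Am_def)
  qed (use Am bc mc in auto)
  have e2: "Am * 0\<^sub>m n 1 + b * 1\<^sub>m 1 = b"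
    unfolding right_mult_zero_mat[OF Am] right_mult_one_mat[OF bc] by (rule left_add_zero_mat[OF bc])
  have e3: "c * 1\<^sub>m n + 1\<^sub>m 1 * (- c) = 0\<^sub>m 1 n"
    unfolding right_mult_one_mat[OF cc] left_mult_one_mat[OF mc]
    by (rule eq_matI) (use cc in auto)
  have e4: "c * 0\<^sub>m n 1 + 1\<^sub>m 1 * 1\<^sub>m 1 = (1\<^sub>m 1 :: 'a mat)"
    unfolding right_mult_zero_mat[OF cc] left_mult_one_mat[OF one_carrier_mat] by (rule left_add_zero_mat) simp
  have Mc: "?M \<in> carrier_mat (n+1) (n+1)" by (rule four_block_carrier_mat[OF Am one_carrier_mat])
  have Rc: "?R \<in> carrier_mat (n+1) (n+1)" by (rule four_block_carrier_mat[OF one_carrier_mat one_carrier_mat])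
  have dR: "Determinant.det ?R = 1"
    using det_four_block_mat_upper_right_zero[OF one_carrier_mat refl mc one_carrier_mat] by simp
  have Xc: "Matrix.mat n n (\<lambda>(i,j). A i j - A i n * A n j) \<in> carrier_mat n n" by simp
  have "Determinant.det (?M * ?R) = Determinant.det ?M"
    using det_mult[OF Mc Rc] unfolding dR by simp
  moreover have "Determinant.det (?M * ?R) = Determinant.det (Matrix.mat n n (\<lambda>(i,j). A i j - A i n * A n j))"
    unfolding prod e1 e2 e3 e4
    using det_four_block_mat_lower_left_zero[OF Xc bc refl one_carrier_mat] by simp
  ultimately show ?thesis unfolding gdet_mat M[symmetric] by simp
qed



lemma prod_set_integral:
  fixes g h :: "real \<Rightarrow> real" and A :: "real set"
  assumes g: "set_integrable lborel A g" and h: "set_integrable lborel A h"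
  shows "set_integrable lborel (A \<times> A) (\<lambda>z. g (fst z) * h (snd z))"
    and "(LINT z:A \<times> A|lborel. g (fst z) * h (snd z)) = (LINT x:A|lborel. g x) * (LINT y:A|lborel. h y)"
proof -
  define G where "G = (\<lambda>x. indicator A x * g x)"
  define H where "H = (\<lambda>x. indicator A x * h x)"
  have Gi: "integrable lborel G" using g unfolding set_integrable_def G_def by simp
  have Hi: "integrable lborel H" using h unfolding set_integrable_def H_def by simp
  have Gm[measurable]: "G \<in> borel_measurable lborel" by (rule borel_measurable_integrable[OF Gi])
  have Hm[measurable]: "H \<in> borel_measurable lborel" by (rule borel_measurable_integrable[OF Hi])
  have eq: "(\<lambda>z. indicator (A \<times> A) z *\<^sub>R (g (fst z) * h (snd z))) = (\<lambda>z. G (fst z) * H (snd z))"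
    by (auto simp: fun_eq_iff G_def H_def indicator_times split: split_indicator)
  have meas: "(\<lambda>z. G (fst z) * H (snd z)) \<in> borel_measurable (lborel \<Otimes>\<^sub>M lborel)"
    by measurable
  have int2: "integrable (lborel \<Otimes>\<^sub>M lborel) (\<lambda>z. G (fst z) * H (snd z))"
  proof (rule lborel_pair.Fubini_integrable[OF meas])
    have "(\<lambda>x. LINT y|lborel. norm (G (fst (x, y)) * H (snd (x, y)))) = (\<lambda>x. norm (G x) * (LINT y|lborel. norm (H y)))"
      by (simp add: abs_mult)
    moreover have "integrable lborel (\<lambda>x. norm (G x) * (LINT y|lborel. norm (H y)))"
      using Gi by (intro integrable_mult_left) simp
    ultimately show "integrable lborel (\<lambda>x. LINT y|lborel. norm (G (fst (x, y)) * H (snd (x, y))))" by simp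
    show "AE x in lborel. integrable lborel (\<lambda>y. G (fst (x, y)) * H (snd (x, y)))"
      using Hi by (intro AE_I2) simp
  qed
  show "set_integrable lborel (A \<times> A) (\<lambda>z. g (fst z) * h (snd z))"
    unfolding set_integrable_def eq lborel_prod[symmetric] by (rule int2)
  have "(LINT z:A \<times> A|lborel. g (fst z) * h (snd z)) = integral\<^sup>L (lborel \<Otimes>\<^sub>M lborel) (\<lambda>z. G (fst z) * H (snd z))"
    unfolding set_lebesgue_integral_def eq lborel_prod ..
  also have "\<dots> = (LINT x|lborel. (LINT y|lborel. G (fst (x,y)) * H (snd (x,y))))"
    by (rule lborel_pair.integral_fst'[OF int2, symmetric])
  also have "\<dots> = (LINT x|lborel. G x) * (LINT y|lborel. H y)"
    by simp
  also have "\<dots> = (LINT x:A|lborel. g x) * (LINT y:A|lborel. h y)"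
    unfolding set_lebesgue_integral_def G_def H_def by simp
  finally show "(LINT z:A \<times> A|lborel. g (fst z) * h (snd z)) = (LINT x:A|lborel. g x) * (LINT y:A|lborel. h y)" .
qed



lemma powr_mhalf: "0 < (x::real) \<Longrightarrow> x powr (-(1/2)) = 1 / sqrt x"
proof -
  assume x: "0 < x"
  have "x powr (-(1/2)) = 1 / x powr (1/2)" using powr_minus_divide[of x "1/2"] by simp
  also have "x powr (1/2) = sqrt x" using powr_half_sqrt[of x] x by simp
  finally show ?thesis .
qed

lemma isqrt_int: "set_integrable lborel {0<..<1::real} (\<lambda>x. 1 / sqrt x)"
proof -
  have "(\<lambda>x::real. x powr (-1/2)) integrable_on {0<..1}"
    by (rule integrable_on_powr_from_0') simp_all
  then have "(\<lambda>x::real. x powr (-1/2)) absolutely_integrable_on {0<..1}"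
    by (rule nonnegative_absolutely_integrable_1) simp
  then have a: "set_integrable lborel {0<..1} (\<lambda>x::real. x powr (-1/2))"
    unfolding set_integrable_def
    by (subst (asm) integrable_completion) measurable
  then have b: "set_integrable lborel {0<..<1} (\<lambda>x::real. x powr (-1/2))"
    by (rule set_integrable_subset) auto
  show ?thesis
  proof (rule set_integrable_bound[OF b])
    show "set_borel_measurable lborel {0<..<1} (\<lambda>x::real. 1 / sqrt x)"
      unfolding set_borel_measurable_def by measurable
    show "AE x\<in>{0<..<1} in lborel. norm (1 / sqrt x) \<le> norm (x powr (- 1 / 2))"
      by (intro AE_I2) (simp add: powr_mhalf)
  qed
qed


definition ff :: "nat \<Rightarrow> nat \<Rightarrow> nat \<Rightarrow> nat \<Rightarrow> real \<times> real \<Rightarrow> real" where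
  "ff s t i j = (\<lambda>z. (fst z ^ (s+i) * snd z ^ (s+j) / (fst z + snd z)) *
      ((1 - fst z) / (1 + fst z)) ^ t * ((1 - snd z) / (1 + snd z)) ^ t)"

definition gg :: "nat \<Rightarrow> nat \<Rightarrow> nat \<Rightarrow> real \<Rightarrow> real" where
  "gg s t i = (\<lambda>x. x ^ (s+i) / (1 + x) * ((1 - x) / (1 + x)) ^ t)"

lemma mm_ff: "mm s t i j = (LINT z:{0<..<1} \<times> {0<..<1}|lborel. ff s t i j z)"
  unfolding mm_def ff_def ..

lemma phi_gg: "phi s t i = sqrt 2 * (LINT x:{0<..<1}|lborel. gg s t i x)"
  unfolding phi_def gg_def ..

lemma ff_meas2[measurable]: "ff s t i j \<in> borel_measurable (lborel \<Otimes>\<^sub>M lborel)"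
  unfolding ff_def by measurable

lemma gg_meas[measurable]: "gg s t i \<in> borel_measurable borel"
  unfolding gg_def by measurable

lemma unit_bounds:
  fixes x :: real assumes "0 < x" "x < 1"
  shows "0 \<le> x ^ a" "x ^ a \<le> 1" "0 \<le> ((1 - x) / (1 + x)) ^ t" "((1 - x) / (1 + x)) ^ t \<le> 1"
    "0 < 1 + x"
proof -
  show "0 \<le> x ^ a" "x ^ a \<le> 1" using assms by (auto intro: power_le_one)
  have u0: "0 \<le> (1 - x) / (1 + x)" and u1: "(1 - x) / (1 + x) \<le> 1" using assms by auto
  show "0 \<le> ((1 - x) / (1 + x)) ^ t" using u0 by simp
  show "((1 - x) / (1 + x)) ^ t \<le> 1" using u0 u1 by (rule power_le_one)
  show "0 < 1 + x" using assms by simp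
qed

lemma gg_int: "set_integrable lborel {0<..<1} (gg s t i)"
proof (rule set_integrable_bound[OF isqrt_int])
  show "set_borel_measurable lborel {0<..<1} (gg s t i)"
    unfolding set_borel_measurable_def by measurable
  show "AE x\<in>{0<..<1} in lborel. norm (gg s t i x) \<le> norm (1 / sqrt x)"
  proof (intro AE_I2 impI)
    fix x :: real assume "x \<in> {0<..<1}"
    then have x0: "0 < x" and x1: "x < 1" by auto
    note b = unit_bounds[OF x0 x1]
    have g0: "0 \<le> gg s t i x" unfolding gg_def using b by simp
    have h1: "x^(s+i)/(1+x) \<le> 1" using b(2)[of "s+i"] x0 by (simp add: divide_le_eq)
    have "gg s t i x \<le> 1" unfolding gg_def by (rule mult_le_one[OF h1 b(3) b(4)])
    also have "\<dots> \<le> 1 / sqrt x" using x0 x1 by (simp add: le_divide_eq real_sqrt_le_1_iff)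
    finally show "norm (gg s t i x) \<le> norm (1 / sqrt x)" using g0 x0 by simp
  qed
qed

lemma ff_int: "set_integrable lborel ({0<..<1} \<times> {0<..<1}) (ff s t i j)"
proof (rule set_integrable_bound[OF prod_set_integral(1)[OF isqrt_int isqrt_int]])
  show "set_borel_measurable lborel ({0<..<1} \<times> {0<..<1}) (ff s t i j)"
    unfolding set_borel_measurable_def lborel_prod[symmetric] by measurable
  show "AE z\<in>{0<..<1} \<times> {0<..<1} in lborel. norm (ff s t i j z) \<le> norm (1 / sqrt (fst z) * (1 / sqrt (snd z)))"
  proof (intro AE_I2 impI)
    fix z :: "real \<times> real" assume "z \<in> {0<..<1} \<times> {0<..<1}"
    then obtain x y where z: "z = (x,y)" and x0: "0 < x" and x1: "x < 1" and y0: "0 < y" and y1: "y < 1"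
      by (cases z) auto
    note bx = unit_bounds[OF x0 x1] and bY = unit_bounds[OF y0 y1]
    define N where "N = x ^ (s+i) * y ^ (s+j) * ((1 - x) / (1 + x)) ^ t * ((1 - y) / (1 + y)) ^ t"
    have N0: "0 \<le> N" unfolding N_def using bx bY by simp
    have N1: "N \<le> 1" unfolding N_def using bx bY by (intro mult_le_one mult_nonneg_nonneg) auto
    have fz: "ff s t i j z = N / (x + y)" unfolding ff_def z N_def by simp
    have sq: "sqrt x * sqrt y \<le> x + y"
    proof -
      have "0 \<le> (sqrt x - sqrt y)^2" by simp
      then have "2 * (sqrt x * sqrt y) \<le> (sqrt x)^2 + (sqrt y)^2" by (simp add: power2_eq_square algebra_simps)
      then show ?thesis using x0 y0 by simp
    qed
    have sp: "0 < sqrt x * sqrt y" using x0 y0 by simp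
    have "N / (x + y) \<le> 1 / (x + y)" using N1 x0 y0 by (simp add: divide_right_mono)
    also have "\<dots> \<le> 1 / (sqrt x * sqrt y)" by (rule frac_le) (use sq sp in auto)
    finally have "N / (x + y) \<le> 1 / sqrt x * (1 / sqrt y)" by simp
    moreover have "0 \<le> N / (x + y)" using N0 x0 y0 by simp
    ultimately show "norm (ff s t i j z) \<le> norm (1 / sqrt (fst z) * (1 / sqrt (snd z)))"
      unfolding fz using z x0 y0 by simp
  qed
qed


lemma alg1: fixes x y P Q U V :: real assumes "0<x" "0<y"
  shows "(P * Q / (x+y)) * (((1-x)/(1+x)) * U) * (((1-y)/(1+y)) * V) = (P*Q/(x+y)) * U * V - 2 * (P/(1+x) * U * (Q/(1+y) * V))"
proof -
  have d: "(1+x)*(1+y) \<noteq> 0" using assms by simp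
  have "((1-x)/(1+x)) * ((1-y)/(1+y)) = ((1-x)*(1-y)) / ((1+x)*(1+y))" by simp
  also have "(1-x)*(1-y) = (1+x)*(1+y) - 2*(x+y)" by (simp add: algebra_simps)
  also have "((1+x)*(1+y) - 2*(x+y)) / ((1+x)*(1+y)) = 1 - 2*(x+y)/((1+x)*(1+y))" using d by (simp add: diff_divide_distrib)
  finally have h: "((1-x)/(1+x)) * ((1-y)/(1+y)) = 1 - 2 * (x+y) / ((1+x)*(1+y))" .
  have r: "2 * (P/(1+x) * U * (Q/(1+y) * V)) = 2*P*Q*U*V/((1+x)*(1+y))" by simp
  have gen: "\<And>c D::real. c \<noteq> 0 \<Longrightarrow> D \<noteq> 0 \<Longrightarrow> (P*Q/c)*U*V*(1 - 2*c/D) = (P*Q/c)*U*V - 2*P*Q*U*V/D"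
    by (simp add: field_simps)
  have "(P * Q / (x+y)) * (((1-x)/(1+x)) * U) * (((1-y)/(1+y)) * V) = (P * Q / (x+y)) * U * V * (((1-x)/(1+x)) * ((1-y)/(1+y)))"
    by (simp add: ac_simps)
  also have "\<dots> = (P*Q/(x+y))*U*V*(1 - 2*(x+y)/((1+x)*(1+y)))" unfolding h ..
  also have "\<dots> = (P*Q/(x+y))*U*V - 2*P*Q*U*V/((1+x)*(1+y))" by (rule gen) (use assms d in simp_all)
  finally show ?thesis unfolding r .
qed

lemma swap_set_integral:
  fixes F :: "real \<times> real \<Rightarrow> real"
  assumes Fm[measurable]: "F \<in> borel_measurable (lborel \<Otimes>\<^sub>M lborel)"
  shows "(LINT z:{0<..<1::real} \<times> {0<..<1::real}|lborel. F (snd z, fst z)) = (LINT z:{0<..<1} \<times> {0<..<1}|lborel. F z)"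
proof -
  define H where "H = (\<lambda>z::real\<times>real. indicator ({0<..<1::real} \<times> {0<..<1::real}) z *\<^sub>R F z)"
  have Hm: "H \<in> borel_measurable (lborel \<Otimes>\<^sub>M lborel)" unfolding H_def by measurable
  have "(LINT z:{0<..<1::real} \<times> {0<..<1::real}|lborel. F (snd z, fst z)) = integral\<^sup>L (lborel \<Otimes>\<^sub>M lborel) (\<lambda>(x,y). H (y,x))"
    unfolding set_lebesgue_integral_def lborel_prod H_def
    by (rule arg_cong[where f="integral\<^sup>L lborel"]) (auto simp: fun_eq_iff indicator_def)
  also have "\<dots> = integral\<^sup>L (lborel \<Otimes>\<^sub>M lborel) H" by (rule lborel_pair.integral_product_swap[OF Hm])
  also have "\<dots> = (LINT z:{0<..<1} \<times> {0<..<1}|lborel. F z)" unfolding set_lebesgue_integral_def lborel_prod H_def ..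
  finally show ?thesis .
qed

lemma mm_sym: "mm s t i j = mm s t j i"
proof -
  have eqf: "ff s t i j = (\<lambda>z. ff s t j i (snd z, fst z))" by (simp add: fun_eq_iff ff_def ac_simps)
  have "mm s t i j = (LINT z:{0<..<1::real} \<times> {0<..<1::real}|lborel. ff s t j i (snd z, fst z))"
    unfolding mm_ff eqf ..
  also have "\<dots> = mm s t j i" unfolding mm_ff by (rule swap_set_integral) measurable
  finally show ?thesis .
qed

lemma mm_shift: "mm (Suc s) t i j = mm s t (Suc i) (Suc j)"
  by (simp add: mm_def)

lemma phi_shift: "phi (Suc s) t i = phi s t (Suc i)"
  by (simp add: phi_def)

lemma mm_step: "mm s (Suc t) i j = mm s t i j - phi s t i * phi s t j"
proof -
  have pt: "ff s (Suc t) i j z = ff s t i j z - 2 * (gg s t i (fst z) * gg s t j (snd z))"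
    if "z \<in> {0<..<1} \<times> {0<..<1}" for z
  proof -
    obtain x y where z: "z = (x,y)" by (cases z)
    have x0: "0 < x" and y0: "0 < y" using that z by auto
    show ?thesis unfolding z ff_def gg_def fst_conv snd_conv power_Suc
      by (rule alg1[OF x0 y0])
  qed
  have i2: "set_integrable lborel ({0<..<1} \<times> {0<..<1}) (\<lambda>z. 2 * (gg s t i (fst z) * gg s t j (snd z)))"
    by (rule set_integrable_mult_right) (rule prod_set_integral(1)[OF gg_int gg_int])
  have Am: "{0<..<1::real} \<times> {0<..<1::real} \<in> sets lborel"
    unfolding sets_lborel by (rule borel_open) (intro open_Times open_greaterThanLessThan)
  have "mm s (Suc t) i j = (LINT z:{0<..<1} \<times> {0<..<1}|lborel. ff s t i j z - 2 * (gg s t i (fst z) * gg s t j (snd z)))"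
    unfolding mm_ff by (rule set_lebesgue_integral_cong[OF Am]) (auto simp: pt)
  also have "\<dots> = mm s t i j - (LINT z:{0<..<1} \<times> {0<..<1}|lborel. 2 * (gg s t i (fst z) * gg s t j (snd z)))"
    unfolding mm_ff by (rule set_integral_diff(2)[OF ff_int i2])
  also have "(LINT z:{0<..<1} \<times> {0<..<1}|lborel. 2 * (gg s t i (fst z) * gg s t j (snd z)))
      = 2 * ((LINT x:{0<..<1}|lborel. gg s t i x) * (LINT y:{0<..<1}|lborel. gg s t j y))"
    by (simp add: set_integral_mult_right prod_set_integral(2)[OF gg_int gg_int])
  also have "\<dots> = phi s t i * phi s t j" unfolding phi_gg
    by (simp add: algebra_simps)
  finally show ?thesis .
qed


lemma sign_sq: "(of_int (sign p) :: 'a::comm_ring_1) * of_int (sign p) = 1"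
  by (simp add: sign_def)

lemma gdet_both:
  fixes A :: "nat \<Rightarrow> nat \<Rightarrow> 'a::comm_ring_1"
  assumes p: "p permutes {..<n}"
  shows "gdet n (\<lambda>i j. A (p i) (p j)) = gdet n A"
proof -
  have "gdet n (\<lambda>i j. A (p i) (p j)) = of_int (sign p) * gdet n (\<lambda>i j. A i (p j))"
    using gdet_rows[OF p, of "\<lambda>i j. A i (p j)"] by simp
  also have "gdet n (\<lambda>i j. A i (p j)) = of_int (sign p) * gdet n A" by (rule gdet_cols[OF p])
  finally have "gdet n (\<lambda>i j. A (p i) (p j)) = (of_int (sign p) * of_int (sign p)) * gdet n A"
    by (simp only: mult.assoc)
  then show ?thesis by (simp only: sign_sq mult_1)
qed

lemma rho_perm:
  assumes "k < m"
  shows "(\<lambda>i. if i < k then Suc i else if i = k then 0 else i) permutes {..<m}"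
proof -
  let ?p = "\<lambda>i::nat. if i < k then Suc i else if i = k then 0 else i"
  have inj: "inj_on ?p {..<m}" by (auto simp: inj_on_def split: if_splits)
  have sub: "?p ` {..<m} \<subseteq> {..<m}" using assms by auto
  have "?p ` {..<m} = {..<m}" by (rule endo_inj_surj[OF _ sub inj]) simp
  then have "bij_betw ?p {..<m} {..<m}" using inj by (simp add: bij_betw_def)
  then show ?thesis by (rule bij_imp_permutes) (use assms in auto)
qed

lemma cancel_sign:
  fixes e a b c d p q :: real
  assumes h: "e * e = 1" and E: "e * a * b = e * c * d - p * (e * q)"
  shows "a * b = c * d - p * q"
proof -
  from E have "e * (e * a * b) = e * (e * c * d - p * (e * q))" by simp
  then have "(e * e) * (a * b) = (e * e) * (c * d) - (e * e) * (p * q)" by (simp add: algebra_simps)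
  then show ?thesis using h by simp
qed


theorem proposition3p6:
  fixes n s t :: nat
  assumes "n \<ge> 1"
  shows "tau s t (n+1) * tau (s+1) t (n-1) = tau s t n * tau (s+1) t n - (xi s t n)^2 \<and>
    tau s (t+1) n * tau s t (n-1) = tau s t n * tau s (t+1) (n-1) - (sigma s t (n-1))^2 \<and>
    tau s (t+1) n * tau (s+1) t (n-1) = tau s t n * tau (s+1) (t+1) (n-1) - (psi s t (n-1))^2 \<and>
    tau s (t+1) n * xi s t (n-1) = tau s t n * xi s (t+1) (n-1) - psi s t (n-1) * sigma s t (n-1)"
proof -
  obtain k where n: "n = Suc k" using assms by (cases n) auto
  define \<rho> where "\<rho> = (\<lambda>i::nat. if i < k then Suc i else if i = k then 0 else i)"
  define r where "r = (\<lambda>i::nat. if i < k then i else Suc k)"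
  have \<rho>1: "\<rho> permutes {..<Suc k}" unfolding \<rho>_def by (rule rho_perm) simp
  have \<rho>2: "\<rho> permutes {..<Suc (Suc k)}" unfolding \<rho>_def by (rule rho_perm) simp
  define sg where "sg = (of_int (sign \<rho>) :: real)"
  have sg: "sg * sg = 1" unfolding sg_def by (rule sign_sq)
  have sg2: "sg * (sg * X) = X" for X using sg by (simp add: mult.assoc[symmetric])
  have DJr: "gdet (Suc (Suc k)) F * gdet k F = gdet (Suc k) F * gdet (Suc k) (\<lambda>i j. F (r i) (r j))
     - gdet (Suc k) (\<lambda>i j. F (r i) j) * gdet (Suc k) (\<lambda>i j. F i (r j))" for F :: "nat \<Rightarrow> nat \<Rightarrow> real"
    using DJ[of k F] unfolding r_def add_2_eq_Suc' Suc_eq_plus1[symmetric] .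
  have rS: "\<rho> (r i) = Suc i" if "i < Suc k" for i using that by (auto simp: \<rho>_def r_def)
  have \<rho>k: "\<rho> i = Suc i" if "i < k" for i using that by (auto simp: \<rho>_def)
  have tau: "tau s' t' N = gdet N (\<lambda>i j. mm s' t' i j)" for s' t' N unfolding tau_def detn_gdet ..
  have xi: "xi s' t' N = gdet N (\<lambda>i j. mm s' t' i (Suc j))" for s' t' N unfolding xi_def detn_gdet by simp
  have sigma: "sigma s t k = gdet (Suc k) (\<lambda>i j. if j < k then mm s t i j else phi s t i)"
    unfolding sigma_def detn_gdet by simp
  have psi: "psi s t k = gdet (Suc k) (\<lambda>i j. if j < k then mm s t i (Suc j) else phi s t i)"
    unfolding psi_def detn_gdet Suc_eq_plus1 ..
  have xiT: "gdet N (\<lambda>i j. mm s' t' (Suc i) j) = xi s' t' N" for s' t' N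
  proof -
    have "gdet N (\<lambda>i j. mm s' t' (Suc i) j) = gdet N (\<lambda>i j. mm s' t' (Suc j) i)"
      by (rule gdet_transpose[symmetric])
    also have "\<dots> = xi s' t' N" unfolding xi by (rule gdet_cong) (rule mm_sym)
    finally show ?thesis .
  qed

  define F1 where "F1 = (\<lambda>i j. mm s t (\<rho> i) (\<rho> j))"
  have a1: "gdet (Suc (Suc k)) F1 = tau s t (Suc (Suc k))"
    unfolding F1_def tau by (rule gdet_both[OF \<rho>2])
  have b1: "gdet k F1 = tau (Suc s) t k"
    unfolding F1_def tau by (rule gdet_cong) (simp add: \<rho>k mm_shift)
  have c1: "gdet (Suc k) F1 = tau s t (Suc k)"
    unfolding F1_def tau by (rule gdet_both[OF \<rho>1])
  have d1: "gdet (Suc k) (\<lambda>i j. F1 (r i) (r j)) = tau (Suc s) t (Suc k)"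
    unfolding F1_def tau by (rule gdet_cong) (simp add: rS mm_shift)
  have e1: "gdet (Suc k) (\<lambda>i j. F1 (r i) j) = sg * xi s t (Suc k)"
  proof -
    have "gdet (Suc k) (\<lambda>i j. F1 (r i) j) = gdet (Suc k) (\<lambda>i j. mm s t (Suc i) (\<rho> j))"
      unfolding F1_def by (rule gdet_cong) (simp add: rS)
    also have "\<dots> = sg * gdet (Suc k) (\<lambda>i j. mm s t (Suc i) j)" unfolding sg_def by (rule gdet_cols[OF \<rho>1])
    finally show ?thesis by (simp add: xiT)
  qed
  have f1: "gdet (Suc k) (\<lambda>i j. F1 i (r j)) = sg * xi s t (Suc k)"
  proof -
    have "gdet (Suc k) (\<lambda>i j. F1 i (r j)) = gdet (Suc k) (\<lambda>i j. mm s t (\<rho> i) (Suc j))"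
      unfolding F1_def by (rule gdet_cong) (simp add: rS)
    also have "\<dots> = sg * gdet (Suc k) (\<lambda>i j. mm s t i (Suc j))" unfolding sg_def by (rule gdet_rows[OF \<rho>1])
    finally show ?thesis by (simp add: xi)
  qed
  have id1: "tau s t (Suc (Suc k)) * tau (Suc s) t k = tau s t (Suc k) * tau (Suc s) t (Suc k) - (xi s t (Suc k))^2"
    using DJr[of F1] unfolding a1 b1 c1 d1 e1 f1
    by (simp add: power2_eq_square algebra_simps sg2)


  define B where "B = (\<lambda>i j. if i < Suc k then (if j < Suc k then mm s t i j else phi s t i)
      else (if j < Suc k then phi s t j else 1))"
  have tB: "gdet (Suc (Suc k)) B = tau s (Suc t) (Suc k)"
  proof -
    have "gdet (Suc (Suc k)) B = gdet (Suc k) (\<lambda>i j. B i j - B i (Suc k) * B (Suc k) j)"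
      by (rule bordered) (simp add: B_def)
    also have "\<dots> = tau s (Suc t) (Suc k)" unfolding tau
      by (rule gdet_cong) (simp add: B_def mm_step)
    finally show ?thesis .
  qed
  have tk: "gdet k B = tau s t k" unfolding tau by (rule gdet_cong) (simp add: B_def)
  have tk1: "gdet (Suc k) B = tau s t (Suc k)" unfolding tau by (rule gdet_cong) (simp add: B_def)
  have tBr: "gdet (Suc k) (\<lambda>i j. B (r i) (r j)) = tau s (Suc t) k"
  proof -
    have "gdet (Suc k) (\<lambda>i j. B (r i) (r j)) = gdet k (\<lambda>i j. B (r i) (r j) - B (r i) (r k) * B (r k) (r j))"
      by (rule bordered) (simp add: B_def r_def)
    also have "\<dots> = tau s (Suc t) k" unfolding tau
      by (rule gdet_cong) (simp add: B_def r_def mm_step)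
    finally show ?thesis .
  qed
  have sg1: "gdet (Suc k) (\<lambda>i j. B i (r j)) = sigma s t k"
    unfolding sigma by (rule gdet_cong) (auto simp: B_def r_def)
  have sg2': "gdet (Suc k) (\<lambda>i j. B (r i) j) = sigma s t k"
  proof -
    have "gdet (Suc k) (\<lambda>i j. B (r i) j) = gdet (Suc k) (\<lambda>i j. B (r j) i)"
      by (rule gdet_transpose[symmetric])
    also have "\<dots> = sigma s t k" unfolding sigma
      by (rule gdet_cong) (auto simp: B_def r_def mm_sym)
    finally show ?thesis .
  qed
  have ps1: "gdet (Suc k) (\<lambda>i j. B i (Suc j)) = psi s t k"
    unfolding psi by (rule gdet_cong) (auto simp: B_def)
  have ps2: "gdet (Suc k) (\<lambda>i j. B (Suc i) j) = psi s t k"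
  proof -
    have "gdet (Suc k) (\<lambda>i j. B (Suc i) j) = gdet (Suc k) (\<lambda>i j. B (Suc j) i)"
      by (rule gdet_transpose[symmetric])
    also have "\<dots> = psi s t k" unfolding psi
      by (rule gdet_cong) (auto simp: B_def mm_sym)
    finally show ?thesis .
  qed

  have id2: "tau s (Suc t) (Suc k) * tau s t k = tau s t (Suc k) * tau s (Suc t) k - (sigma s t k)^2"
    using DJr[of B] unfolding tB tk tk1 tBr sg1 sg2'
    by (simp add: power2_eq_square)

  define F3 where "F3 = (\<lambda>i j. B (\<rho> i) (\<rho> j))"
  have a3: "gdet (Suc (Suc k)) F3 = tau s (Suc t) (Suc k)"
    unfolding F3_def gdet_both[OF \<rho>2] by (rule tB)
  have b3: "gdet k F3 = tau (Suc s) t k"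
    unfolding F3_def tau by (rule gdet_cong) (simp add: \<rho>k B_def mm_shift)
  have c3: "gdet (Suc k) F3 = tau s t (Suc k)"
    unfolding F3_def gdet_both[OF \<rho>1] by (rule tk1)
  have d3: "gdet (Suc k) (\<lambda>i j. F3 (r i) (r j)) = tau (Suc s) (Suc t) k"
  proof -
    have "gdet (Suc k) (\<lambda>i j. F3 (r i) (r j)) = gdet (Suc k) (\<lambda>i j. B (Suc i) (Suc j))"
      unfolding F3_def by (rule gdet_cong) (simp add: rS)
    also have "\<dots> = gdet k (\<lambda>i j. B (Suc i) (Suc j) - B (Suc i) (Suc k) * B (Suc k) (Suc j))"
      by (rule bordered) (simp add: B_def)
    also have "\<dots> = tau (Suc s) (Suc t) k" unfolding tau
      by (rule gdet_cong) (simp add: B_def mm_step mm_shift phi_shift)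
    finally show ?thesis .
  qed
  have e3: "gdet (Suc k) (\<lambda>i j. F3 (r i) j) = sg * psi s t k"
  proof -
    have "gdet (Suc k) (\<lambda>i j. F3 (r i) j) = gdet (Suc k) (\<lambda>i j. B (Suc i) (\<rho> j))"
      unfolding F3_def by (rule gdet_cong) (simp add: rS)
    also have "\<dots> = sg * gdet (Suc k) (\<lambda>i j. B (Suc i) j)" unfolding sg_def by (rule gdet_cols[OF \<rho>1])
    finally show ?thesis by (simp add: ps2)
  qed
  have f3: "gdet (Suc k) (\<lambda>i j. F3 i (r j)) = sg * psi s t k"
  proof -
    have "gdet (Suc k) (\<lambda>i j. F3 i (r j)) = gdet (Suc k) (\<lambda>i j. B (\<rho> i) (Suc j))"
      unfolding F3_def by (rule gdet_cong) (simp add: rS)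
    also have "\<dots> = sg * gdet (Suc k) (\<lambda>i j. B i (Suc j))" unfolding sg_def by (rule gdet_rows[OF \<rho>1])
    finally show ?thesis by (simp add: ps1)
  qed
  have id3: "tau s (Suc t) (Suc k) * tau (Suc s) t k = tau s t (Suc k) * tau (Suc s) (Suc t) k - (psi s t k)^2"
    using DJr[of F3] unfolding a3 b3 c3 d3 e3 f3
    by (simp add: power2_eq_square algebra_simps sg2)

  define F4 where "F4 = (\<lambda>i j. B (\<rho> i) j)"
  have a4: "gdet (Suc (Suc k)) F4 = sg * tau s (Suc t) (Suc k)"
    unfolding F4_def sg_def gdet_rows[OF \<rho>2] tB ..
  have b4: "gdet k F4 = xi s t k"
  proof -
    have "gdet k F4 = gdet k (\<lambda>i j. mm s t (Suc i) j)"
      unfolding F4_def by (rule gdet_cong) (simp add: \<rho>k B_def)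
    then show ?thesis by (simp add: xiT)
  qed
  have c4: "gdet (Suc k) F4 = sg * tau s t (Suc k)"
    unfolding F4_def sg_def gdet_rows[OF \<rho>1] tk1 ..
  have d4: "gdet (Suc k) (\<lambda>i j. F4 (r i) (r j)) = xi s (Suc t) k"
  proof -
    have "gdet (Suc k) (\<lambda>i j. F4 (r i) (r j)) = gdet (Suc k) (\<lambda>i j. B (Suc i) (r j))"
      unfolding F4_def by (rule gdet_cong) (simp add: rS)
    also have "\<dots> = gdet k (\<lambda>i j. B (Suc i) (r j) - B (Suc i) (r k) * B (Suc k) (r j))"
      by (rule bordered) (simp add: B_def r_def)
    also have "\<dots> = gdet k (\<lambda>i j. mm s (Suc t) (Suc i) j)"
      by (rule gdet_cong) (simp add: B_def r_def mm_step)
    finally show ?thesis by (simp add: xiT)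
  qed
  have e4: "gdet (Suc k) (\<lambda>i j. F4 (r i) j) = psi s t k"
  proof -
    have "gdet (Suc k) (\<lambda>i j. F4 (r i) j) = gdet (Suc k) (\<lambda>i j. B (Suc i) j)"
      unfolding F4_def by (rule gdet_cong) (simp add: rS)
    then show ?thesis by (simp add: ps2)
  qed
  have f4: "gdet (Suc k) (\<lambda>i j. F4 i (r j)) = sg * sigma s t k"
    unfolding F4_def sg_def gdet_rows[OF \<rho>1, of "\<lambda>i j. B i (r j)"] sg1 ..
  have id4: "tau s (Suc t) (Suc k) * xi s t k = tau s t (Suc k) * xi s (Suc t) k - psi s t k * sigma s t k"
  proof (rule cancel_sign[OF sg])
    show "sg * tau s (Suc t) (Suc k) * xi s t k = sg * tau s t (Suc k) * xi s (Suc t) k - psi s t k * (sg * sigma s t k)"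
      using DJr[of F4] unfolding a4 b4 c4 d4 e4 f4 by simp
  qed

  show ?thesis using id1 id2 id3 id4 unfolding n by simp
qed


end
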